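(* There is a family of FMSM instances, with ground sets of size $n$ for arbitrarily large $n$, in which $f$ is monotone submodular and $\mathcal{I}$ is a partition matroid, such that $\max_{S \in \mathcal{F}} f(S) = 1$ but there is a point $x \in P_{\mathcal{F}}$ whose multilinear extension value satisfies $F(x) = \Omega(\sqrt{n})$.
   Context: An FMSM instance consists of a ground set $V$ of $n$ elements, a non-negative submodular function $f : 2^V \to \mathbb{R}_{\ge 0}$, a matroid $\mathcal{I} \subseteq 2^V$, a partition of $V$ into color groups $V_1,\dots,V_C$, and integer bounds $0 \le \ell_c \le u_c$. Fair sets: $\mathcal{C} = \{S : \ell_c \le |S \cap V_c| \le u_c\ \forall c\}$; feasible sets $\mathcal{F} = \mathcal{I} \cap \mathcal{C}$. $P_{\mathcal{F}}$ is the convex hull of the indicator vectors $\mathbb{1}_S$, $S \in \mathcal{F}$. The multilinear extension of $f$ is $F(x) = \sum_{S \subseteq V} f(S) \prod_{i \in S} x_i \prod_{j \notin S}(1-x_j)$ for $x \in [0,1]^n$. $f$ is monotone if $f(Y) \le f(X)$ whenever $Y \subseteq X$. A partition matroid is given by a partition of $V$ into blocks $G_i$ with bounds $k_i$, a set $X$ being independent iff $|X \cap G_i| \le k_i$ for all $i$. *)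

theory Defs
  imports "HOL-Analysis.Analysis"
begin

definition is_partition :: "nat set \<Rightarrow> (nat \<Rightarrow> nat set) \<Rightarrow> nat set \<Rightarrow> bool" where
  "is_partition V P I \<longleftrightarrow> (\<forall>i\<in>I. P i \<noteq> {} \<and> P i \<subseteq> V)
     \<and> (\<forall>i\<in>I. \<forall>j\<in>I. i \<noteq> j \<longrightarrow> P i \<inter> P j = {}) \<and> (\<Union>i\<in>I. P i) = V"

definition nonneg_set_fun :: "nat set \<Rightarrow> (nat set \<Rightarrow> real) \<Rightarrow> bool" where
  "nonneg_set_fun V f \<longleftrightarrow> (\<forall>S. S \<subseteq> V \<longrightarrow> f S \<ge> 0)"

definition submodular :: "nat set \<Rightarrow> (nat set \<Rightarrow> real) \<Rightarrow> bool" where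
  "submodular V f \<longleftrightarrow> (\<forall>X Y. X \<subseteq> V \<longrightarrow> Y \<subseteq> V \<longrightarrow> f (X \<union> Y) + f (X \<inter> Y) \<le> f X + f Y)"

definition monotone_set_fun :: "nat set \<Rightarrow> (nat set \<Rightarrow> real) \<Rightarrow> bool" where
  "monotone_set_fun V f \<longleftrightarrow> (\<forall>X Y. Y \<subseteq> X \<longrightarrow> X \<subseteq> V \<longrightarrow> f Y \<le> f X)"

definition partition_matroid :: "nat set \<Rightarrow> (nat \<Rightarrow> nat set) \<Rightarrow> nat \<Rightarrow> (nat \<Rightarrow> nat) \<Rightarrow> nat set set" where
  "partition_matroid V G m k = {X. X \<subseteq> V \<and> (\<forall>i<m. card (X \<inter> G i) \<le> k i)}"

definition fair_sets :: "nat set \<Rightarrow> (nat \<Rightarrow> nat set) \<Rightarrow> nat \<Rightarrow> (nat \<Rightarrow> nat) \<Rightarrow> (nat \<Rightarrow> nat) \<Rightarrow> nat set set" where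
  "fair_sets V Vc C l u = {S. S \<subseteq> V \<and> (\<forall>c<C. l c \<le> card (S \<inter> Vc c) \<and> card (S \<inter> Vc c) \<le> u c)}"

definition indicator_polytope :: "nat set set \<Rightarrow> (nat \<Rightarrow> real) set" where
  "indicator_polytope Fam = {x. \<exists>w::nat set \<Rightarrow> real. (\<forall>S\<in>Fam. 0 \<le> w S) \<and> sum w Fam = 1
        \<and> (\<forall>i. x i = (\<Sum>S\<in>Fam. w S * indicator S i))}"

definition multilinear_ext :: "nat set \<Rightarrow> (nat set \<Rightarrow> real) \<Rightarrow> (nat \<Rightarrow> real) \<Rightarrow> real" where
  "multilinear_ext V f x = (\<Sum>S\<in>Pow V. f S * (\<Prod>i\<in>S. x i) * (\<Prod>j\<in>V - S. 1 - x j))"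

end

theory Submission
  imports Defs
begin


lemma ml_total:
  fixes x :: "nat \<Rightarrow> real"
  assumes "finite V"
  shows "(\<Sum>S\<in>Pow V. (\<Prod>i\<in>S. x i) * (\<Prod>j\<in>V - S. 1 - x j)) = 1"
  using prod_add[OF assms, of x "\<lambda>j. 1 - x j"] by simp

lemma ml_hit:
  fixes x :: "nat \<Rightarrow> real"
  assumes fin: "finite V" and EV: "E \<subseteq> V"
  shows "(\<Sum>S\<in>Pow V. (if S \<inter> E \<noteq> {} then 1 else 0) * (\<Prod>i\<in>S. x i) * (\<Prod>j\<in>V - S. 1 - x j))
     = 1 - (\<Prod>j\<in>E. 1 - x j)"
proof -
  define P where "P = (\<lambda>S. (\<Prod>i\<in>S. x i) * (\<Prod>j\<in>V - S. 1 - x j))"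
  define A where "A = {S\<in>Pow V. S \<inter> E \<noteq> {}}"
  have finE: "finite E" using fin EV finite_subset by blast
  have finP: "finite (Pow V)" using fin by simp
  have un: "Pow V = A \<union> Pow (V - E)" unfolding A_def by blast
  have dj: "A \<inter> Pow (V - E) = {}" unfolding A_def by blast
  have finA: "finite A" unfolding A_def using finP by simp
  have finB: "finite (Pow (V - E))" using fin by simp
  have split: "(\<Sum>S\<in>Pow V. P S) = (\<Sum>S\<in>A. P S) + (\<Sum>S\<in>Pow (V - E). P S)"
    unfolding un by (rule sum.union_disjoint[OF finA finB dj])
  have lhs: "(\<Sum>S\<in>Pow V. (if S \<inter> E \<noteq> {} then 1 else 0) * (\<Prod>i\<in>S. x i) * (\<Prod>j\<in>V - S. 1 - x j)) = (\<Sum>S\<in>A. P S)"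
  proof -
    have "(\<Sum>S\<in>A. P S) = (\<Sum>S\<in>Pow V. if S \<inter> E \<noteq> {} then P S else 0)"
      unfolding A_def by (rule sum.inter_filter[OF finP])
    also have "\<dots> = (\<Sum>S\<in>Pow V. (if S \<inter> E \<noteq> {} then 1 else 0) * (\<Prod>i\<in>S. x i) * (\<Prod>j\<in>V - S. 1 - x j))"
      by (rule sum.cong[OF refl]) (simp add: P_def)
    finally show ?thesis by simp
  qed
  have "(\<Sum>S\<in>Pow (V - E). P S) = (\<Sum>S\<in>Pow (V - E). (\<Prod>j\<in>E. 1 - x j) * ((\<Prod>i\<in>S. x i) * (\<Prod>j\<in>(V - E) - S. 1 - x j)))"
  proof (rule sum.cong[OF refl])
    fix S assume S: "S \<in> Pow (V - E)"
    have e1: "V - S = E \<union> ((V - E) - S)" using S EV by blast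
    have e2: "E \<inter> ((V - E) - S) = {}" by blast
    have f2: "finite ((V - E) - S)" using fin by simp
    have "(\<Prod>j\<in>V - S. 1 - x j) = (\<Prod>j\<in>E. 1 - x j) * (\<Prod>j\<in>(V - E) - S. 1 - x j)"
      unfolding e1 by (rule prod.union_disjoint[OF finE f2 e2])
    then show "P S = (\<Prod>j\<in>E. 1 - x j) * ((\<Prod>i\<in>S. x i) * (\<Prod>j\<in>(V - E) - S. 1 - x j))"
      unfolding P_def by simp
  qed
  also have "\<dots> = (\<Prod>j\<in>E. 1 - x j) * (\<Sum>S\<in>Pow (V - E). (\<Prod>i\<in>S. x i) * (\<Prod>j\<in>(V - E) - S. 1 - x j))"
    by (rule sum_distrib_left[symmetric])
  also have "\<dots> = (\<Prod>j\<in>E. 1 - x j)"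
    using ml_total[of "V - E" x] fin by simp
  finally have B: "(\<Sum>S\<in>Pow (V - E). P S) = (\<Prod>j\<in>E. 1 - x j)" .
  have T: "(\<Sum>S\<in>Pow V. P S) = 1" unfolding P_def by (rule ml_total[OF fin])
  show ?thesis using split lhs B T by linarith
qed



definition WW :: "nat \<Rightarrow> nat" where "WW m = 2*m+1"
definition nn :: "nat \<Rightarrow> nat" where "nn m = m * WW m"
definition row :: "nat \<Rightarrow> nat \<Rightarrow> nat" where "row m p = p div WW m"
definition pos :: "nat \<Rightarrow> nat \<Rightarrow> nat" where "pos m p = p mod WW m"
definition blk :: "nat \<Rightarrow> nat \<Rightarrow> nat" where
  "blk m p = (if pos m p = 2*m then m*m else row m p * m + pos m p div 2)"
definition col :: "nat \<Rightarrow> nat \<Rightarrow> nat" where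
  "col m p = (if pos m p = 0 then m*m else row m p * m + (pos m p - 1) div 2)"

lemma uniq: "a*m + b = c*m + (d::nat) \<Longrightarrow> b < m \<Longrightarrow> d < m \<Longrightarrow> a = c \<and> b = d"
proof -
  assume e: "a*m + b = c*m + d" and b: "b < m" and d: "d < m"
  have "(a*m + b) div m = a" "(a*m+b) mod m = b" using b by auto
  moreover have "(c*m + d) div m = c" "(c*m+d) mod m = d" using d by auto
  ultimately show ?thesis using e by metis
qed

lemma lt_sq: "a < m \<Longrightarrow> b < (m::nat) \<Longrightarrow> a*m + b < m*m"
proof -
  assume "a < m" "b < m"
  then have "a*m + b < a*m + m" by simp
  also have "\<dots> = (a+1)*m" by simp
  also have "\<dots> \<le> m*m" using \<open>a<m\<close> by (intro mult_right_mono) auto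
  finally show ?thesis .
qed

lemma decomp:
  assumes "p < nn m"
  shows "row m p < m" "pos m p \<le> 2*m" "p = row m p * WW m + pos m p"
proof -
  have W: "WW m > 0" by (simp add: WW_def)
  show "row m p < m" using assms W unfolding row_def nn_def
    by (simp add: div_less_iff_less_mult mult.commute)
  have "pos m p < WW m" unfolding pos_def using W by simp
  then show "pos m p \<le> 2*m" by (simp add: WW_def)
  show "p = row m p * WW m + pos m p" unfolding row_def pos_def by simp
qed

lemma enc:
  assumes "t \<le> 2*m"
  shows "row m (i * WW m + t) = i" "pos m (i * WW m + t) = t"
proof -
  have t: "t < WW m" using assms by (simp add: WW_def)
  show "row m (i * WW m + t) = i" unfolding row_def using t by simp
  show "pos m (i * WW m + t) = t" unfolding pos_def using t by simp
qed

lemma enc_lt: "i < m \<Longrightarrow> t \<le> 2*m \<Longrightarrow> i * WW m + t < nn m"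
proof -
  assume "i < m" "t \<le> 2*m"
  then have "i * WW m + t < i * WW m + WW m" by (simp add: WW_def)
  also have "\<dots> = (i+1) * WW m" by simp
  also have "\<dots> \<le> m * WW m" using \<open>i<m\<close> by (intro mult_right_mono) auto
  finally show ?thesis by (simp add: nn_def)
qed

lemma blk_lt: "p < nn m \<Longrightarrow> blk m p < m*m + 1"
proof -
  assume p: "p < nn m"
  show ?thesis
  proof (cases "pos m p = 2*m")
    case False
    then have "pos m p div 2 < m" using decomp(2)[OF p] by linarith
    then have "row m p * m + pos m p div 2 < m*m" using lt_sq[OF decomp(1)[OF p]] by blast
    then show ?thesis using False by (simp add: blk_def)
  qed (simp add: blk_def)
qed

lemma col_lt: "p < nn m \<Longrightarrow> col m p < m*m + 1"
proof -
  assume p: "p < nn m"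
  show ?thesis
  proof (cases "pos m p = 0")
    case False
    then have "(pos m p - 1) div 2 < m" using decomp(2)[OF p] by linarith
    then have "row m p * m + (pos m p - 1) div 2 < m*m" using lt_sq[OF decomp(1)[OF p]] by blast
    then show ?thesis using False by (simp add: col_def)
  qed (simp add: col_def)
qed

lemma blk_small: "p < nn m \<Longrightarrow> pos m p \<noteq> 2*m \<Longrightarrow> blk m p < m*m \<and> blk m p = row m p * m + pos m p div 2"
proof -
  assume p: "p < nn m" and h: "pos m p \<noteq> 2*m"
  then have "pos m p div 2 < m" using decomp(2)[OF p] by linarith
  then show ?thesis using lt_sq[OF decomp(1)[OF p]] h by (simp add: blk_def)
qed

lemma col_small: "p < nn m \<Longrightarrow> pos m p \<noteq> 0 \<Longrightarrow> col m p < m*m \<and> col m p = row m p * m + (pos m p - 1) div 2"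
proof -
  assume p: "p < nn m" and h: "pos m p \<noteq> 0"
  then have "(pos m p - 1) div 2 < m" using decomp(2)[OF p] by linarith
  then show ?thesis using lt_sq[OF decomp(1)[OF p]] h by (simp add: col_def)
qed

lemma blk_H2: "p < nn m \<Longrightarrow> q < nn m \<Longrightarrow> blk m p = blk m q \<Longrightarrow> pos m p = 2*m \<Longrightarrow> pos m q = 2*m"
proof (rule ccontr)
  assume "p < nn m" "q < nn m" "blk m p = blk m q" "pos m p = 2*m" "pos m q \<noteq> 2*m"
  then show False using blk_small[of q m] by (simp add: blk_def)
qed

lemma col_H1: "p < nn m \<Longrightarrow> q < nn m \<Longrightarrow> col m p = col m q \<Longrightarrow> pos m p = 0 \<Longrightarrow> pos m q = 0"
proof (rule ccontr)
  assume "p < nn m" "q < nn m" "col m p = col m q" "pos m p = 0" "pos m q \<noteq> 0"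
  then show False using col_small[of q m] by (simp add: col_def)
qed

lemma blk_dec:
  assumes p: "p < nn m" and q: "q < nn m" and e: "blk m p = blk m q" and h: "pos m p \<noteq> 2*m"
  shows "pos m q \<noteq> 2*m \<and> row m p = row m q \<and> pos m p div 2 = pos m q div 2"
proof -
  have hq: "pos m q \<noteq> 2*m" using blk_H2[OF q p e[symmetric]] h by blast
  have "pos m p div 2 < m" "pos m q div 2 < m" using decomp(2)[OF p] decomp(2)[OF q] h hq by linarith+
  moreover have "row m p * m + pos m p div 2 = row m q * m + pos m q div 2"
    using e blk_small[OF p h] blk_small[OF q hq] by simp
  ultimately show ?thesis using hq uniq by blast
qed

lemma col_dec:
  assumes p: "p < nn m" and q: "q < nn m" and e: "col m p = col m q" and h: "pos m p \<noteq> 0"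
  shows "pos m q \<noteq> 0 \<and> row m p = row m q \<and> (pos m p - 1) div 2 = (pos m q - 1) div 2"
proof -
  have hq: "pos m q \<noteq> 0" using col_H1[OF q p e[symmetric]] h by blast
  have "(pos m p - 1) div 2 < m" "(pos m q - 1) div 2 < m" using decomp(2)[OF p] decomp(2)[OF q] h hq by linarith+
  moreover have "row m p * m + (pos m p - 1) div 2 = row m q * m + (pos m q - 1) div 2"
    using e col_small[OF p h] col_small[OF q hq] by simp
  ultimately show ?thesis using hq uniq by blast
qed



definition MM :: "nat \<Rightarrow> nat" where "MM m = m*m + 1"
definition Gb :: "nat \<Rightarrow> nat \<Rightarrow> nat set" where "Gb m j = {p. p < nn m \<and> blk m p = j}"
definition Cc :: "nat \<Rightarrow> nat \<Rightarrow> nat set" where "Cc m j = {p. p < nn m \<and> col m p = j}"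
definition Fam :: "nat \<Rightarrow> nat set set" where
  "Fam m = partition_matroid {..<nn m} (Gb m) (MM m) (\<lambda>_. 1) \<inter> fair_sets {..<nn m} (Cc m) (MM m) (\<lambda>_. 1) (\<lambda>_. 1)"
definition EE :: "nat \<Rightarrow> nat \<Rightarrow> nat set" where "EE m i = {p. p < nn m \<and> row m p = i \<and> even (pos m p)}"
definition ff :: "nat \<Rightarrow> nat set \<Rightarrow> real" where "ff m S = (\<Sum>i<m. if S \<inter> EE m i \<noteq> {} then 1 else 0)"
definition TT :: "nat \<Rightarrow> nat \<Rightarrow> nat set" where "TT m i = {p. p < nn m \<and> (row m p = i \<longleftrightarrow> even (pos m p))}"

lemma jdec: "j < m*m \<Longrightarrow> j div m < m \<and> j mod m < (m::nat) \<and> j = (j div m) * m + j mod m"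
proof -
  assume j: "j < m*m"
  then have m: "0 < m" by (cases m) auto
  have "j div m < m" using j m by (simp add: div_less_iff_less_mult)
  moreover have "j mod m < m" using m by simp
  moreover have "j = (j div m) * m + j mod m" by simp
  ultimately show ?thesis by blast
qed

lemma part_G: "0 < m \<Longrightarrow> is_partition {..<nn m} (Gb m) {..<MM m}"
  unfolding is_partition_def
proof (intro conjI ballI impI)
  assume m: "0 < m"
  fix j assume j: "j \<in> {..<MM m}"
  show "Gb m j \<noteq> {}"
  proof (cases "j < m*m")
    case True
    note jd = jdec[OF True]
    let ?p = "(j div m) * WW m + 2*(j mod m)"
    have t: "2*(j mod m) \<le> 2*m" using jd by simp
    have "?p < nn m" using enc_lt[OF conjunct1[OF jd] t] .
    moreover have "blk m ?p = j" using enc[OF t] jd unfolding blk_def by auto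
    ultimately show ?thesis unfolding Gb_def by blast
  next
    case False
    then have jj: "j = m*m" using j by (simp add: MM_def)
    have "0 * WW m + 2*m < nn m" using enc_lt[OF m, of "2*m"] by simp
    moreover have "blk m (0 * WW m + 2*m) = j" using enc[of "2*m" m 0] jj unfolding blk_def by simp
    ultimately show ?thesis unfolding Gb_def by blast
  qed
  show "Gb m j \<subseteq> {..<nn m}" unfolding Gb_def by auto
next
  fix i j assume "i \<in> {..<MM m}" "j \<in> {..<MM m}" "i \<noteq> j"
  then show "Gb m i \<inter> Gb m j = {}" unfolding Gb_def by auto
next
  show "(\<Union>i\<in>{..<MM m}. Gb m i) = {..<nn m}"
    unfolding Gb_def MM_def using blk_lt by auto
qed

lemma part_C: "0 < m \<Longrightarrow> is_partition {..<nn m} (Cc m) {..<MM m}"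
  unfolding is_partition_def
proof (intro conjI ballI impI)
  assume m: "0 < m"
  fix j assume j: "j \<in> {..<MM m}"
  show "Cc m j \<noteq> {}"
  proof (cases "j < m*m")
    case True
    note jd = jdec[OF True]
    let ?p = "(j div m) * WW m + (2*(j mod m) + 1)"
    have t: "2*(j mod m) + 1 \<le> 2*m" using jd by simp
    have "?p < nn m" using enc_lt[OF conjunct1[OF jd] t] .
    moreover have "col m ?p = j" using enc[OF t] jd unfolding col_def by auto
    ultimately show ?thesis unfolding Cc_def by blast
  next
    case False
    then have jj: "j = m*m" using j by (simp add: MM_def)
    have "0 * WW m + 0 < nn m" using enc_lt[OF m, of "0"] by simp
    moreover have "col m (0 * WW m + 0) = j" using enc[of "0" m 0] jj unfolding col_def by simp
    ultimately show ?thesis unfolding Cc_def by blast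
  qed
  show "Cc m j \<subseteq> {..<nn m}" unfolding Cc_def by auto
next
  fix i j assume "i \<in> {..<MM m}" "j \<in> {..<MM m}" "i \<noteq> j"
  then show "Cc m i \<inter> Cc m j = {}" unfolding Cc_def by auto
next
  show "(\<Union>i\<in>{..<MM m}. Cc m i) = {..<nn m}"
    unfolding Cc_def MM_def using col_lt by auto
qed



lemma FamD:
  assumes "S \<in> Fam m"
  shows "S \<subseteq> {..<nn m}" "\<And>j. j < MM m \<Longrightarrow> card (S \<inter> Gb m j) \<le> 1"
        "\<And>j. j < MM m \<Longrightarrow> card (S \<inter> Cc m j) = 1"
  using assms unfolding Fam_def partition_matroid_def fair_sets_def by auto

lemma card1_eq:
  assumes "card (S \<inter> A) \<le> 1" "S \<subseteq> {..<N::nat}" "a \<in> S" "a \<in> A" "b \<in> S" "b \<in> A"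
  shows "a = b"
proof -
  have fin: "finite (S \<inter> A)" using assms(2) finite_subset by blast
  then have "\<forall>a1\<in>S \<inter> A. \<forall>a2\<in>S \<inter> A. a1 = a2" using assms(1) card_le_Suc0_iff_eq[OF fin] by simp
  then show ?thesis using assms(3-6) by blast
qed

lemma succ_facts:
  assumes p: "p < nn m" and ev: "even (pos m p)" and lt: "pos m p < 2*m" and d: "d \<le> 2"
  shows "p + d < nn m" "row m (p+d) = row m p" "pos m (p+d) = pos m p + d"
proof -
  have pd: "p + d = row m p * WW m + (pos m p + d)" using decomp(3)[OF p] by simp
  obtain j where j: "pos m p = 2*j" using ev by blast
  have "j < m" using lt j by simp
  then have t: "pos m p + d \<le> 2*m" using j d by simp
  show "p + d < nn m" using pd enc_lt[OF decomp(1)[OF p] t] by simp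
  have "row m (p+d) = row m (row m p * WW m + (pos m p + d))" by (subst pd) (rule refl)
  then show "row m (p+d) = row m p" using enc(1)[OF t] by simp
  have "pos m (p+d) = pos m (row m p * WW m + (pos m p + d))" by (subst pd) (rule refl)
  then show "pos m (p+d) = pos m p + d" using enc(2)[OF t] by simp
qed

lemma prop_step:
  assumes S: "S \<in> Fam m" and pS: "p \<in> S" and ev: "even (pos m p)" and lt: "pos m p < 2*m"
  shows "p + 2 \<in> S"
proof -
  have p: "p < nn m" using FamD(1)[OF S] pS by auto
  have s1: "p+1 < nn m" "row m (p+1) = row m p" "pos m (p+1) = pos m p + 1"
    using succ_facts[OF p ev lt, of 1] by auto
  have s2: "p+2 < nn m" "row m (p+2) = row m p" "pos m (p+2) = pos m p + 2"
    using succ_facts[OF p ev lt, of 2] by auto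
  obtain j where j: "pos m p = 2*j" using ev by blast
  have jm: "j < m" using lt j by simp
  have n1: "pos m p \<noteq> 2*m" using lt by simp
  have n2: "pos m (p+1) \<noteq> 2*m" using s1(3) j jm by simp
  have dv: "(2*j+1) div 2 = j" by simp
  have b1: "blk m (p+1) = blk m p"
    using blk_small[OF p n1] blk_small[OF s1(1) n2] s1(2,3) j dv by simp
  have bl: "blk m p < MM m" using blk_lt[OF p] by (simp add: MM_def)
  have "p + 1 \<notin> S"
  proof
    assume "p + 1 \<in> S"
    then have "p = p + 1" using card1_eq[OF FamD(2)[OF S bl] FamD(1)[OF S] pS _ _ ] b1 p s1(1)
      unfolding Gb_def by auto
    then show False by simp
  qed
  have c1: "col m (p+1) < MM m" using col_lt[OF s1(1)] by (simp add: MM_def)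
  from FamD(3)[OF S c1] obtain q where q: "S \<inter> Cc m (col m (p+1)) = {q}"
    using card_1_singleton_iff[of "S \<inter> Cc m (col m (p+1))"] by auto
  then have qS: "q \<in> S" and qn: "q < nn m" and qc: "col m q = col m (p+1)" unfolding Cc_def by auto
  have "pos m (p+1) \<noteq> 0" using s1 by simp
  from col_dec[OF s1(1) qn qc[symmetric] this]
  have "pos m q \<noteq> 0" "row m q = row m p" "(pos m q - 1) div 2 = pos m p div 2" using s1 by auto
  then have "pos m q = pos m p + 1 \<or> pos m q = pos m p + 2"
  proof -
    assume a: "pos m q \<noteq> 0" "row m q = row m p" "(pos m q - 1) div 2 = pos m p div 2"
    define r where "r = pos m q - 1"
    have "r = 2 * (r div 2) + r mod 2" by simp
    moreover have "r mod 2 < 2" by simp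
    moreover have "r div 2 = j" using a(3) j unfolding r_def by simp
    ultimately have "r = 2*j \<or> r = 2*j + 1" by linarith
    then show ?thesis using a(1) j unfolding r_def by auto
  qed
  then have "q = p + 1 \<or> q = p + 2" using decomp(3)[OF qn] decomp(3)[OF p] \<open>row m q = row m p\<close> by auto
  then show ?thesis using qS \<open>p + 1 \<notin> S\<close> by auto
qed

lemma prop_end:
  assumes S: "S \<in> Fam m"
  shows "p \<in> S \<Longrightarrow> even (pos m p) \<Longrightarrow> pos m p + 2*k = 2*m \<Longrightarrow> p + 2*k \<in> S"
proof (induction k arbitrary: p)
  case 0 then show ?case by simp
next
  case (Suc k)
  have p: "p < nn m" using FamD(1)[OF S] Suc.prems by auto
  have lt: "pos m p < 2*m" using Suc.prems by simp
  have p2: "p + 2 \<in> S" using prop_step[OF S Suc.prems(1,2) lt] .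
  have s2: "p+2 < nn m" "row m (p+2) = row m p" "pos m (p+2) = pos m p + 2"
    using succ_facts[OF p Suc.prems(2) lt, of 2] by auto
  have "p + 2 + 2*k \<in> S" using Suc.IH[OF p2] s2 Suc.prems by simp
  then show ?case by (simp add: add.assoc)
qed

lemma hit_end:
  assumes S: "S \<in> Fam m" and h: "S \<inter> EE m i \<noteq> {}"
  shows "i * WW m + 2*m \<in> S \<and> i < m"
proof -
  obtain p where pS: "p \<in> S" and pE: "p \<in> EE m i" using h by auto
  have p: "p < nn m" and r: "row m p = i" and ev: "even (pos m p)" using pE unfolding EE_def by auto
  obtain j where j: "pos m p = 2*j" using ev by blast
  have "j \<le> m" using j decomp(2)[OF p] by simp
  define k where "k = m - j"
  have k: "pos m p + 2*k = 2*m" using j \<open>j \<le> m\<close> by (simp add: k_def)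
  have "p + 2*k \<in> S" using prop_end[OF S pS ev k] .
  moreover have "p + 2*k = i * WW m + 2*m" using decomp(3)[OF p] r k by simp
  ultimately show ?thesis using decomp(1)[OF p] r by simp
qed

lemma hit_unique:
  assumes S: "S \<in> Fam m" and h1: "S \<inter> EE m i \<noteq> {}" and h2: "S \<inter> EE m i' \<noteq> {}"
  shows "i = i'"
proof -
  have a: "i * WW m + 2*m \<in> S" "i < m" and b: "i' * WW m + 2*m \<in> S" "i' < m" using hit_end[OF S] h1 h2 by auto
  have ga: "i * WW m + 2*m \<in> Gb m (m*m)" using enc[of "2*m" m i] enc_lt[OF a(2), of "2*m"]
    unfolding Gb_def blk_def by simp
  have gb: "i' * WW m + 2*m \<in> Gb m (m*m)" using enc[of "2*m" m i'] enc_lt[OF b(2), of "2*m"]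
    unfolding Gb_def blk_def by simp
  have "m*m < MM m" by (simp add: MM_def)
  from card1_eq[OF FamD(2)[OF S this] FamD(1)[OF S] a(1) ga b(1) gb]
  have "i * WW m + 2*m = i' * WW m + 2*m" .
  then show ?thesis using enc(1)[of "2*m" m i, OF order_refl] enc(1)[of "2*m" m i', OF order_refl] by (simp add: WW_def)
qed

lemma ff_le1: "S \<in> Fam m \<Longrightarrow> ff m S \<le> 1"
proof -
  assume S: "S \<in> Fam m"
  show ?thesis
  proof (cases "\<exists>i. S \<inter> EE m i \<noteq> {}")
    case False then show ?thesis by (simp add: ff_def)
  next
    case True
    then obtain i0 where i0: "S \<inter> EE m i0 \<noteq> {}" by blast
    have "ff m S = (\<Sum>i<m. if i = i0 then 1 else 0)" unfolding ff_def
    proof (rule sum.cong[OF refl])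
      fix i assume "i \<in> {..<m}"
      show "(if S \<inter> EE m i \<noteq> {} then 1 else 0) = (if i = i0 then 1 else (0::real))"
      proof (cases "S \<inter> EE m i \<noteq> {}")
        case True
        then have "i = i0" using hit_unique[OF S True i0] by simp
        then show ?thesis using True by simp
      next
        case False
        then have "i \<noteq> i0" using i0 by auto
        then show ?thesis using False by simp
      qed
    qed
    also have "\<dots> \<le> 1" by (simp add: sum.delta)
    finally show ?thesis .
  qed
qed



lemma TT_feas:
  assumes i: "i < m"
  shows "TT m i \<in> Fam m"
proof -
  have sub: "TT m i \<subseteq> {..<nn m}" unfolding TT_def by auto
  have fin: "finite (TT m i \<inter> A)" for A using sub finite_subset by blast
  have blk1: "card (TT m i \<inter> Gb m j) \<le> 1" for j
  proof -
    have "\<forall>a\<in>TT m i \<inter> Gb m j. \<forall>b\<in>TT m i \<inter> Gb m j. a = b"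
    proof (intro ballI)
      fix a b assume a: "a \<in> TT m i \<inter> Gb m j" and b: "b \<in> TT m i \<inter> Gb m j"
      have an: "a < nn m" and bn: "b < nn m" and e: "blk m a = blk m b"
        and pa: "row m a = i \<longleftrightarrow> even (pos m a)" and pb: "row m b = i \<longleftrightarrow> even (pos m b)"
        using a b unfolding TT_def Gb_def by auto
      show "a = b"
      proof (cases "pos m a = 2*m")
        case True
        then have "pos m b = 2*m" using blk_H2[OF an bn e] by blast
        then show ?thesis using True pa pb decomp(3)[OF an] decomp(3)[OF bn] by auto
      next
        case False
        from blk_dec[OF an bn e False] have "row m a = row m b" "pos m a div 2 = pos m b div 2" by auto
        then have "pos m a = pos m b" using pa pb by presburger
        then show ?thesis using \<open>row m a = row m b\<close> decomp(3)[OF an] decomp(3)[OF bn] by auto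
      qed
    qed
    then show ?thesis using card_le_Suc0_iff_eq[OF fin] by simp
  qed
  have col1: "card (TT m i \<inter> Cc m j) = 1" if j: "j < MM m" for j
  proof -
    have uq: "\<forall>a\<in>TT m i \<inter> Cc m j. \<forall>b\<in>TT m i \<inter> Cc m j. a = b"
    proof (intro ballI)
      fix a b assume a: "a \<in> TT m i \<inter> Cc m j" and b: "b \<in> TT m i \<inter> Cc m j"
      have an: "a < nn m" and bn: "b < nn m" and e: "col m a = col m b"
        and pa: "row m a = i \<longleftrightarrow> even (pos m a)" and pb: "row m b = i \<longleftrightarrow> even (pos m b)"
        using a b unfolding TT_def Cc_def by auto
      show "a = b"
      proof (cases "pos m a = 0")
        case True
        then have "pos m b = 0" using col_H1[OF an bn e] by blast
        then show ?thesis using True pa pb decomp(3)[OF an] decomp(3)[OF bn] by auto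
      next
        case False
        from col_dec[OF an bn e False] have "row m a = row m b" "(pos m a - 1) div 2 = (pos m b - 1) div 2" "pos m b \<noteq> 0" by auto
        then have "pos m a = pos m b" using pa pb False by presburger
        then show ?thesis using \<open>row m a = row m b\<close> decomp(3)[OF an] decomp(3)[OF bn] by auto
      qed
    qed
    have ex: "TT m i \<inter> Cc m j \<noteq> {}"
    proof (cases "j < m*m")
      case True
      note jd = jdec[OF True]
      define t where "t = (if j div m = i then 2*(j mod m) + 2 else 2*(j mod m) + 1)"
      have t: "t \<le> 2*m" using jd unfolding t_def by auto
      let ?p = "(j div m) * WW m + t"
      have "?p < nn m" using enc_lt[OF conjunct1[OF jd] t] .
      moreover have "col m ?p = j" using enc[OF t] jd unfolding col_def t_def by auto
      moreover have "row m ?p = i \<longleftrightarrow> even (pos m ?p)" using enc[OF t] unfolding t_def by auto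
      ultimately show ?thesis unfolding Cc_def TT_def by blast
    next
      case False
      then have jj: "j = m*m" using j by (simp add: MM_def)
      have "i * WW m + 0 < nn m" using enc_lt[OF i, of "0"] by simp
      moreover have "col m (i * WW m + 0) = j" using enc[of "0" m i] jj unfolding col_def by simp
      moreover have "row m (i * WW m + 0) = i \<longleftrightarrow> even (pos m (i * WW m + 0))" using enc[of "0" m i] by simp
      ultimately show ?thesis unfolding Cc_def TT_def by blast
    qed
    have "card (TT m i \<inter> Cc m j) \<le> 1" using card_le_Suc0_iff_eq[OF fin] uq by simp
    moreover have "card (TT m i \<inter> Cc m j) \<noteq> 0" using ex fin by simp
    ultimately show ?thesis by simp
  qed
  show ?thesis unfolding Fam_def partition_matroid_def fair_sets_def using sub blk1 col1 by auto
qed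

lemma TT_hit: "i < m \<Longrightarrow> TT m i \<inter> EE m i' \<noteq> {} \<longleftrightarrow> i' = i"
proof
  assume "TT m i \<inter> EE m i' \<noteq> {}"
  then show "i' = i" unfolding TT_def EE_def by auto
next
  assume i: "i < m" and "i' = i"
  have "i * WW m + 0 \<in> TT m i \<inter> EE m i'" using enc[of 0 m i] enc_lt[OF i, of 0] \<open>i' = i\<close>
    unfolding TT_def EE_def by simp
  then show "TT m i \<inter> EE m i' \<noteq> {}" by blast
qed

lemma ff_TT: "i < m \<Longrightarrow> ff m (TT m i) = 1"
proof -
  assume i: "i < m"
  have "ff m (TT m i) = (\<Sum>i'<m. if i' = i then 1 else 0)" unfolding ff_def
    using TT_hit[OF i] by simp
  also have "\<dots> = 1" using i by (simp add: sum.delta)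
  finally show ?thesis .
qed

lemma TT_inj: "inj_on (TT m) {..<m}"
proof (rule inj_onI)
  fix i i' assume i: "i \<in> {..<m}" and i': "i' \<in> {..<m}" and e: "TT m i = TT m i'"
  have "TT m i \<inter> EE m i \<noteq> {}" using TT_hit i by auto
  then have "TT m i' \<inter> EE m i \<noteq> {}" using e by simp
  then show "i = i'" using TT_hit i' by auto
qed

lemma ff_props: "nonneg_set_fun V (ff m) \<and> submodular V (ff m) \<and> monotone_set_fun V (ff m)"
proof (intro conjI)
  show "nonneg_set_fun V (ff m)" unfolding nonneg_set_fun_def ff_def by (auto intro: sum_nonneg)
  show "monotone_set_fun V (ff m)" unfolding monotone_set_fun_def
  proof (intro allI impI)
    fix X Y :: "nat set" assume YX: "Y \<subseteq> X"
    show "ff m Y \<le> ff m X" unfolding ff_def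
    proof (rule sum_mono)
      fix i assume "i \<in> {..<m}"
      have "Y \<inter> EE m i \<noteq> {} \<Longrightarrow> X \<inter> EE m i \<noteq> {}" using YX by blast
      then show "(if Y \<inter> EE m i \<noteq> {} then 1 else 0) \<le> (if X \<inter> EE m i \<noteq> {} then 1 else (0::real))"
        by auto
    qed
  qed
  show "submodular V (ff m)" unfolding submodular_def
  proof (intro allI impI)
    fix X Y :: "nat set"
    have "ff m (X \<union> Y) + ff m (X \<inter> Y) = (\<Sum>i<m. (if (X \<union> Y) \<inter> EE m i \<noteq> {} then 1 else 0) + (if (X \<inter> Y) \<inter> EE m i \<noteq> {} then 1 else 0))"
      unfolding ff_def by (simp add: sum.distrib)
    also have "\<dots> \<le> (\<Sum>i<m. (if X \<inter> EE m i \<noteq> {} then 1 else 0) + (if Y \<inter> EE m i \<noteq> {} then 1 else 0))"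
      by (rule sum_mono) auto
    also have "\<dots> = ff m X + ff m Y" unfolding ff_def by (simp add: sum.distrib)
    finally show "ff m (X \<union> Y) + ff m (X \<inter> Y) \<le> ff m X + ff m Y" .
  qed
qed



definition wt :: "nat \<Rightarrow> nat set \<Rightarrow> real" where
  "wt m S = (if S \<in> TT m ` {..<m} then 1 / real m else 0)"
definition xx :: "nat \<Rightarrow> nat \<Rightarrow> real" where
  "xx m p = (\<Sum>S\<in>Fam m. wt m S * indicator S p)"

lemma Fam_fin: "finite (Fam m)"
proof -
  have "Fam m \<subseteq> Pow {..<nn m}" using FamD(1) by blast
  then show ?thesis using finite_subset by blast
qed

lemma img_sub: "TT m ` {..<m} \<subseteq> Fam m" using TT_feas by blast

lemma sum_wt: "(\<Sum>S\<in>Fam m. wt m S * g S) = (\<Sum>i<m. g (TT m i) / real m)"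
proof -
  have "(\<Sum>S\<in>Fam m. wt m S * g S) = (\<Sum>S\<in>TT m ` {..<m}. g S / real m)"
    by (rule sum.mono_neutral_cong_right[OF Fam_fin img_sub]) (auto simp: wt_def)
  also have "\<dots> = (\<Sum>i<m. g (TT m i) / real m)"
    by (subst sum.reindex[OF TT_inj]) simp
  finally show ?thesis .
qed

lemma xx_in: "0 < m \<Longrightarrow> xx m \<in> indicator_polytope (Fam m)"
proof -
  assume m: "0 < m"
  have "sum (wt m) (Fam m) = 1" using sum_wt[of m "\<lambda>_. 1"] m by simp
  moreover have "\<forall>S\<in>Fam m. 0 \<le> wt m S" by (simp add: wt_def)
  ultimately show ?thesis unfolding indicator_polytope_def xx_def by blast
qed

lemma xx_E: "p \<in> EE m i \<Longrightarrow> xx m p = 1 / real m"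
proof -
  assume p: "p \<in> EE m i"
  have i: "i < m" using p decomp(1) unfolding EE_def by auto
  have "xx m p = (\<Sum>i'<m. indicator (TT m i') p / real m)" unfolding xx_def by (rule sum_wt)
  also have "\<dots> = (\<Sum>i'<m. (if i' = i then 1 / real m else 0))"
    by (rule sum.cong[OF refl]) (use p in \<open>auto simp: TT_def EE_def indicator_def\<close>)
  also have "\<dots> = 1 / real m" using i by (simp add: sum.delta)
  finally show ?thesis .
qed

lemma EE_img: "i < m \<Longrightarrow> EE m i = (\<lambda>k. i * WW m + 2*k) ` {..m}"
proof
  assume i: "i < m"
  show "(\<lambda>k. i * WW m + 2*k) ` {..m} \<subseteq> EE m i"
  proof
    fix p assume "p \<in> (\<lambda>k. i * WW m + 2*k) ` {..m}"
    then obtain k where k: "k \<le> m" "p = i * WW m + 2*k" by auto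
    then have t: "2*k \<le> 2*m" by simp
    show "p \<in> EE m i" using enc[OF t] enc_lt[OF i t] k unfolding EE_def by simp
  qed
  show "EE m i \<subseteq> (\<lambda>k. i * WW m + 2*k) ` {..m}"
  proof
    fix p assume "p \<in> EE m i"
    then have p: "p < nn m" and r: "row m p = i" and ev: "even (pos m p)" unfolding EE_def by auto
    then obtain k where k: "pos m p = 2*k" by blast
    have "k \<le> m" using decomp(2)[OF p] k by simp
    moreover have "p = i * WW m + 2*k" using decomp(3)[OF p] r k by simp
    ultimately show "p \<in> (\<lambda>k. i * WW m + 2*k) ` {..m}" by blast
  qed
qed

lemma card_EE: "i < m \<Longrightarrow> card (EE m i) = m + 1"
proof -
  assume i: "i < m"
  have "inj_on (\<lambda>k. i * WW m + 2*k) {..m}" by (rule inj_onI) simp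
  then show ?thesis using EE_img[OF i] by (simp add: card_image)
qed

lemma F_val: "0 < m \<Longrightarrow> multilinear_ext {..<nn m} (ff m) (xx m) = real m * (1 - (1 - 1 / real m) ^ (m+1))"
proof -
  assume m: "0 < m"
  let ?P = "\<lambda>S. (\<Prod>i\<in>S. xx m i) * (\<Prod>j\<in>{..<nn m} - S. 1 - xx m j)"
  have "multilinear_ext {..<nn m} (ff m) (xx m) = (\<Sum>S\<in>Pow {..<nn m}. \<Sum>i<m. (if S \<inter> EE m i \<noteq> {} then 1 else 0) * ?P S)"
    unfolding multilinear_ext_def ff_def by (simp add: sum_distrib_right mult.assoc)
  also have "\<dots> = (\<Sum>i<m. \<Sum>S\<in>Pow {..<nn m}. (if S \<inter> EE m i \<noteq> {} then 1 else 0) * ?P S)"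
    by (rule sum.swap)
  also have "\<dots> = (\<Sum>i<m. 1 - (\<Prod>j\<in>EE m i. 1 - xx m j))"
  proof (rule sum.cong[OF refl])
    fix i assume "i \<in> {..<m}"
    have sub: "EE m i \<subseteq> {..<nn m}" unfolding EE_def by auto
    show "(\<Sum>S\<in>Pow {..<nn m}. (if S \<inter> EE m i \<noteq> {} then 1 else 0) * ?P S) = 1 - (\<Prod>j\<in>EE m i. 1 - xx m j)"
      using ml_hit[OF finite_lessThan sub, of "xx m"] by (simp add: mult.assoc)
  qed
  also have "\<dots> = (\<Sum>i<m. 1 - (1 - 1 / real m) ^ (m+1))"
  proof (rule sum.cong[OF refl])
    fix i assume i: "i \<in> {..<m}"
    have "(\<Prod>j\<in>EE m i. 1 - xx m j) = (\<Prod>j\<in>EE m i. 1 - 1 / real m)"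
      by (rule prod.cong[OF refl]) (simp add: xx_E)
    also have "\<dots> = (1 - 1 / real m) ^ (m+1)" using card_EE i by simp
    finally show "1 - (\<Prod>j\<in>EE m i. 1 - xx m j) = 1 - (1 - 1 / real m) ^ (m+1)" by simp
  qed
  also have "\<dots> = real m * (1 - (1 - 1 / real m) ^ (m+1))" by simp
  finally show ?thesis .
qed

lemma pow_bound: "0 < m \<Longrightarrow> (1 - 1 / real m) ^ (m+1) \<le> 1/2"
proof -
  assume m: "0 < m"
  have a: "0 \<le> 1 - 1 / real m" "1 - 1 / real m \<le> 1" using m by (auto simp: field_simps)
  have "(1 - 1 / real m) ^ (m+1) \<le> (1 - 1 / real m) ^ m"
    by (rule power_decreasing[of m "m+1" "1 - 1 / real m"]) (use a in auto)
  also have "\<dots> \<le> exp (- 1 / real m) ^ m"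
    by (rule power_mono) (use a exp_ge_add_one_self[of "- 1 / real m"] in auto)
  also have "\<dots> = exp (real m * (- 1 / real m))" by (rule exp_of_nat_mult[symmetric])
  also have "\<dots> = exp (-1)" using m by simp
  also have "\<dots> \<le> 1/2"
  proof -
    have "2 \<le> exp (1::real)" using exp_ge_add_one_self[of 1] by simp
    then show ?thesis by (simp add: exp_minus field_simps)
  qed
  finally show ?thesis .
qed

theorem theorem3p2:
  shows "\<exists>c::real > 0. \<forall>N::nat. \<exists>n\<ge>N.
    \<exists>(f :: nat set \<Rightarrow> real) (G :: nat \<Rightarrow> nat set) (m :: nat) (k :: nat \<Rightarrow> nat)
      (Vc :: nat \<Rightarrow> nat set) (C :: nat) (l :: nat \<Rightarrow> nat) (u :: nat \<Rightarrow> nat).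
      nonneg_set_fun {..<n} f \<and> submodular {..<n} f \<and> monotone_set_fun {..<n} f
      \<and> is_partition {..<n} G {..<m}
      \<and> is_partition {..<n} Vc {..<C} \<and> (\<forall>c<C. l c \<le> u c)
      \<and> partition_matroid {..<n} G m k \<inter> fair_sets {..<n} Vc C l u \<noteq> {}
      \<and> Max (f ` (partition_matroid {..<n} G m k \<inter> fair_sets {..<n} Vc C l u)) = 1
      \<and> (\<exists>x \<in> indicator_polytope (partition_matroid {..<n} G m k \<inter> fair_sets {..<n} Vc C l u).
           multilinear_ext {..<n} f x \<ge> c * sqrt (real n))"
proof (intro exI[of _ "1/4"] conjI allI)
  show "(0::real) < 1/4" by simp
  fix N :: nat
  define m where "m = N + 1"
  have m: "0 < m" by (simp add: m_def)
  have nN: "N \<le> nn m" unfolding nn_def WW_def m_def by simp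
  have fam: "partition_matroid {..<nn m} (Gb m) (MM m) (\<lambda>_. 1) \<inter> fair_sets {..<nn m} (Cc m) (MM m) (\<lambda>_. 1) (\<lambda>_. 1) = Fam m"
    by (simp add: Fam_def)
  have ne: "Fam m \<noteq> {}" using TT_feas[OF m] by blast
  have mx: "Max (ff m ` Fam m) = 1"
  proof (rule Max_eqI)
    show "finite (ff m ` Fam m)" using Fam_fin by simp
    show "y \<le> 1" if "y \<in> ff m ` Fam m" for y using that ff_le1 by auto
    show "1 \<in> ff m ` Fam m" using TT_feas[OF m] ff_TT[OF m] by (metis image_eqI)
  qed
  have Fx: "1/4 * sqrt (real (nn m)) \<le> multilinear_ext {..<nn m} (ff m) (xx m)"
  proof -
    have "real (nn m) \<le> (2 * real m)^2" unfolding nn_def WW_def using m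
      by (simp add: power2_eq_square algebra_simps)
    then have "sqrt (real (nn m)) \<le> sqrt ((2 * real m)^2)"
      by (rule real_sqrt_le_mono)
    moreover have "sqrt ((2 * real m)^2) = 2 * real m" by (rule real_sqrt_unique) auto
    ultimately have "sqrt (real (nn m)) \<le> 2 * real m" by linarith
    moreover have "real m / 2 \<le> real m * (1 - (1 - 1 / real m) ^ (m+1))"
    proof -
      have q: "(1 - 1 / real m) ^ (m+1) \<le> 1/2" by (rule pow_bound[OF m])
      have "real m * (1/2) \<le> real m * (1 - (1 - 1 / real m) ^ (m+1))"
        by (rule mult_left_mono) (use q in linarith, simp)
      then show ?thesis by simp
    qed
    ultimately show ?thesis using F_val[OF m] by simp
  qed
  show "\<exists>n\<ge>N.
    \<exists>(f :: nat set \<Rightarrow> real) (G :: nat \<Rightarrow> nat set) (m :: nat) (k :: nat \<Rightarrow> nat)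
      (Vc :: nat \<Rightarrow> nat set) (C :: nat) (l :: nat \<Rightarrow> nat) (u :: nat \<Rightarrow> nat).
      nonneg_set_fun {..<n} f \<and> submodular {..<n} f \<and> monotone_set_fun {..<n} f
      \<and> is_partition {..<n} G {..<m}
      \<and> is_partition {..<n} Vc {..<C} \<and> (\<forall>c<C. l c \<le> u c)
      \<and> partition_matroid {..<n} G m k \<inter> fair_sets {..<n} Vc C l u \<noteq> {}
      \<and> Max (f ` (partition_matroid {..<n} G m k \<inter> fair_sets {..<n} Vc C l u)) = 1
      \<and> (\<exists>x \<in> indicator_polytope (partition_matroid {..<n} G m k \<inter> fair_sets {..<n} Vc C l u).
           multilinear_ext {..<n} f x \<ge> 1/4 * sqrt (real n))"
    apply (rule exI[of _ "nn m"])
    apply (intro conjI)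
     apply (rule nN)
    apply (rule exI[of _ "ff m"], rule exI[of _ "Gb m"], rule exI[of _ "MM m"], rule exI[of _ "\<lambda>_. 1"],
           rule exI[of _ "Cc m"], rule exI[of _ "MM m"], rule exI[of _ "\<lambda>_. 1"], rule exI[of _ "\<lambda>_. 1"])
    unfolding fam
    using ff_props[of "{..<nn m}" m] part_G[OF m] part_C[OF m] ne mx xx_in[OF m] Fx by blast
qed

end
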